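(* Let $\pi^{(d)}$ be $\tau^{(d)}$ with $d\ge6$ or $\sigma^{(d)}$ with $d\ge8$, and write $Q=Q_{\pi^{(d)}}$, $\Omega=\Omega_{\pi^{(d)}}$. Then $\{\overline{e}_\alpha\}_{\alpha\in\mathcal{A}}^{Q}=\mathrm{NS}(Q)\setminus\ker\overline{\Omega}$.
   Context: Alphabet $\mathcal{A}=\{1,\dots,d\}$; $\tau^{(d)}$ has top row $1,2,\dots,d$ and bottom row $d,d-1,\dots,6,3,2,5,4,1$; $\sigma^{(d)}$ has top row $1,\dots,d$ and bottom row $d,d-1,\dots,8,3,2,7,6,5,4,1$ (rows list letters in order of $\pi_{\mathrm t}$, $\pi_{\mathrm b}$). $(\Omega_\pi)_{\alpha\beta}=+1$ if $\pi_{\mathrm t}(\alpha)<\pi_{\mathrm t}(\beta)$ and $\pi_{\mathrm b}(\alpha)>\pi_{\mathrm b}(\beta)$, $-1$ if the reverse inequalities hold, $0$ otherwise. Bar denotes reduction mod 2; $\langle u,v\rangle=u\overline{\Omega}v^{\intercal}$ on $(\mathbb{Z}/2\mathbb{Z})^{\mathcal{A}}$ and $\ker\overline{\Omega}=\{u:\langle u,v\rangle=0\ \forall v\}$. $Q_\pi(u)=\sum_{\pi_{\mathrm t}(\alpha)<\pi_{\mathrm t}(\beta)}u_\alpha(\Omega_\pi)_{\alpha\beta}u_\beta+\sum_\alpha u_\alpha\bmod2$. $\mathrm{NS}(Q)=\{u:Q(u)=1\}$ (non-singular vectors). A set $X\subseteq\mathrm{NS}(Q)$ is $Q$-closed if $v,w\in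 X$ and $Q(v+w)=1$ imply $v+w\in X$; $Y^{Q}$ is the smallest $Q$-closed set containing $Y\subseteq\mathrm{NS}(Q)$. *)

theory Defs
  imports Main
begin

text \<open>Alphabet A = {1..d}. A (two-row) permutation is a pair of lists
  (top row, bottom row), each listing the letters in order of pi_t resp. pi_b.
  Positions are 0-based; only comparisons of positions matter.\<close>

type_synonym perm2 = "nat list \<times> nat list"

definition pos :: "nat list \<Rightarrow> nat \<Rightarrow> nat" where
  "pos xs a = (THE i. i < length xs \<and> xs ! i = a)"

definition pit :: "perm2 \<Rightarrow> nat \<Rightarrow> nat" where
  "pit p a = pos (fst p) a"

definition pib :: "perm2 \<Rightarrow> nat \<Rightarrow> nat" where
  "pib p a = pos (snd p) a"

definition tau :: "nat \<Rightarrow> perm2" where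
  "tau d = ([1..<d+1], rev [6..<d+1] @ [3,2,5,4,1])"

definition sigma :: "nat \<Rightarrow> perm2" where
  "sigma d = ([1..<d+1], rev [8..<d+1] @ [3,2,7,6,5,4,1])"

definition Omega :: "perm2 \<Rightarrow> nat \<Rightarrow> nat \<Rightarrow> int" where
  "Omega p a b =
     (if pit p a < pit p b \<and> pib p a > pib p b then 1
      else if pit p a > pit p b \<and> pib p a < pib p b then -1 else 0)"

text \<open>Vectors in (Z/2Z)^A: boolean functions supported in {1..d}.\<close>

definition vecs :: "nat \<Rightarrow> (nat \<Rightarrow> bool) set" where
  "vecs d = {u. \<forall>a. u a \<longrightarrow> a \<in> {1..d}}"

definition vadd :: "(nat \<Rightarrow> bool) \<Rightarrow> (nat \<Rightarrow> bool) \<Rightarrow> nat \<Rightarrow> bool" where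
  "vadd u v = (\<lambda>a. u a \<noteq> v a)"

definition evec :: "nat \<Rightarrow> nat \<Rightarrow> bool" where
  "evec a = (\<lambda>b. b = a)"

text \<open>The form <u,v> = u Omega-bar v^T (True means 1 mod 2).\<close>
definition form :: "nat \<Rightarrow> perm2 \<Rightarrow> (nat \<Rightarrow> bool) \<Rightarrow> (nat \<Rightarrow> bool) \<Rightarrow> bool" where
  "form d p u v =
     odd (\<Sum>a\<in>{1..d}. \<Sum>b\<in>{1..d}. of_bool (u a) * Omega p a b * of_bool (v b))"

definition kerO :: "nat \<Rightarrow> perm2 \<Rightarrow> (nat \<Rightarrow> bool) set" where
  "kerO d p = {u \<in> vecs d. \<forall>v \<in> vecs d. \<not> form d p u v}"

definition Qf :: "nat \<Rightarrow> perm2 \<Rightarrow> (nat \<Rightarrow> bool) \<Rightarrow> bool" where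
  "Qf d p u =
     odd ((\<Sum>a\<in>{1..d}. \<Sum>b\<in>{1..d}.
             if pit p a < pit p b then of_bool (u a) * Omega p a b * of_bool (u b) else 0)
          + (\<Sum>a\<in>{1..d}. of_bool (u a) :: int))"

definition NS :: "nat \<Rightarrow> perm2 \<Rightarrow> (nat \<Rightarrow> bool) set" where
  "NS d p = {u \<in> vecs d. Qf d p u}"

definition Qclosed :: "nat \<Rightarrow> perm2 \<Rightarrow> (nat \<Rightarrow> bool) set \<Rightarrow> bool" where
  "Qclosed d p X \<longleftrightarrow> X \<subseteq> NS d p \<and>
     (\<forall>v\<in>X. \<forall>w\<in>X. Qf d p (vadd v w) \<longrightarrow> vadd v w \<in> X)"

definition Qclosure :: "nat \<Rightarrow> perm2 \<Rightarrow> (nat \<Rightarrow> bool) set \<Rightarrow> (nat \<Rightarrow> bool) set" where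
  "Qclosure d p Y = \<Inter> {X. Qclosed d p X \<and> Y \<subseteq> X}"

end

theory Submission
  imports Defs
begin


lemma pos_nth: "distinct xs \<Longrightarrow> i < length xs \<Longrightarrow> pos xs (xs ! i) = i"
  unfolding pos_def by (rule the_equality) (auto simp: nth_eq_iff_index_eq)

lemma pos_upt: "a \<in> {1..d} \<Longrightarrow> pos [1..<d+1] a = a - 1"
proof -
  assume a: "a \<in> {1..d}"
  have "[1..<d+1] ! (a - 1) = a" using a by (simp del: upt_Suc)
  then show ?thesis using pos_nth[of "[1..<d+1]" "a - 1"] a by auto
qed

definition bpt :: "nat \<Rightarrow> nat \<Rightarrow> nat" where
  "bpt d a = (if 6 \<le> a then d - a else if a = 3 then d - 5 else if a = 2 then d - 4
     else if a = 5 then d - 3 else if a = 4 then d - 2 else d - 1)"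

lemma tau_b: assumes "6 \<le> d" "a \<in> {1..d}" shows "pib (tau d) a = bpt d a"
proof -
  let ?xs = "rev [6..<d+1] @ [3,2,5,4,1]"
  have dist: "distinct ?xs" by auto
  have len: "length ?xs = d" using assms by auto
  have nth: "?xs ! bpt d a = a \<and> bpt d a < length ?xs"
  proof (cases "6 \<le> a")
    case True
    then have "bpt d a = d - a" by (simp add: bpt_def)
    moreover have "rev [6..<d+1] ! (d - a) = a" using True assms
      by (simp add: rev_nth del: upt_Suc)
    moreover have "d - a < length (rev [6..<d+1])" using True assms by (simp del: upt_Suc)
    ultimately show ?thesis using True assms by (simp add: nth_append del: upt_Suc)
  next
    case False
    then have "a \<in> {1,2,3,4,5}" using assms by auto
    have "\<exists>k<5. [3,2,5,4,1::nat] ! k = a \<and> bpt d a = (d - 5) + k"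
    proof -
      from \<open>a \<in> {1,2,3,4,5}\<close> consider "a=1" | "a=2" | "a=3" | "a=4" | "a=5" by blast
      then show ?thesis
      proof cases
        case 1 then show ?thesis using assms by (intro exI[of _ 4]) (simp add: bpt_def)
      next
        case 2 then show ?thesis using assms by (intro exI[of _ 1]) (simp add: bpt_def)
      next
        case 3 then show ?thesis using assms by (intro exI[of _ 0]) (simp add: bpt_def)
      next
        case 4 then show ?thesis using assms by (intro exI[of _ 3]) (simp add: bpt_def)
      next
        case 5 then show ?thesis using assms by (intro exI[of _ 2]) (simp add: bpt_def)
      qed
    qed
    then obtain k where k: "k < 5" "[3,2,5,4,1::nat] ! k = a" "bpt d a = (d - 5) + k" by blast
    have l: "length (rev [6..<d+1]) = d - 5" using assms by (simp del: upt_Suc)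
    have "?xs ! ((d - 5) + k) = [3,2,5,4,1::nat] ! k"
      using nth_append_length_plus[of "rev [6..<d+1]" "[3,2,5,4,1::nat]" k] l by simp
    then show ?thesis using k len assms by simp
  qed
  have "pos ?xs (?xs ! bpt d a) = bpt d a" using pos_nth[OF dist] nth by blast
  then show ?thesis unfolding pib_def tau_def using nth by simp
qed

definition bps :: "nat \<Rightarrow> nat \<Rightarrow> nat" where
  "bps d a = (if 8 \<le> a then d - a else if a = 3 then d - 7 else if a = 2 then d - 6
     else if a = 7 then d - 5 else if a = 6 then d - 4 else if a = 5 then d - 3
     else if a = 4 then d - 2 else d - 1)"

lemma sigma_b: assumes "8 \<le> d" "a \<in> {1..d}" shows "pib (sigma d) a = bps d a"
proof -
  let ?xs = "rev [8..<d+1] @ [3,2,7,6,5,4,1]"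
  have dist: "distinct ?xs" by auto
  have len: "length ?xs = d" using assms by auto
  have nth: "?xs ! bps d a = a \<and> bps d a < length ?xs"
  proof (cases "8 \<le> a")
    case True
    then have "bps d a = d - a" by (simp add: bps_def)
    moreover have "rev [8..<d+1] ! (d - a) = a" using True assms
      by (simp add: rev_nth del: upt_Suc)
    moreover have "d - a < length (rev [8..<d+1])" using True assms by (simp del: upt_Suc)
    ultimately show ?thesis using True assms by (simp add: nth_append del: upt_Suc)
  next
    case False
    then have "a \<in> {1,2,3,4,5,6,7}" using assms by auto
    have "\<exists>k<7. [3,2,7,6,5,4,1::nat] ! k = a \<and> bps d a = (d - 7) + k"
    proof -
      from \<open>a \<in> {1,2,3,4,5,6,7}\<close> consider "a=1" | "a=2" | "a=3" | "a=4" | "a=5" | "a=6" | "a=7" by blast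
      then show ?thesis
      proof cases
        case 1 then show ?thesis using assms by (intro exI[of _ 6]) (simp add: bps_def)
      next
        case 2 then show ?thesis using assms by (intro exI[of _ 1]) (simp add: bps_def)
      next
        case 3 then show ?thesis using assms by (intro exI[of _ 0]) (simp add: bps_def)
      next
        case 4 then show ?thesis using assms by (intro exI[of _ 5]) (simp add: bps_def)
      next
        case 5 then show ?thesis using assms by (intro exI[of _ 4]) (simp add: bps_def)
      next
        case 6 then show ?thesis using assms by (intro exI[of _ 3]) (simp add: bps_def)
      next
        case 7 then show ?thesis using assms by (intro exI[of _ 2]) (simp add: bps_def)
      qed
    qed
    then obtain k where k: "k < 7" "[3,2,7,6,5,4,1::nat] ! k = a" "bps d a = (d - 7) + k" by blast
    have l: "length (rev [8..<d+1]) = d - 7" using assms by (simp del: upt_Suc)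
    have "?xs ! ((d - 7) + k) = [3,2,7,6,5,4,1::nat] ! k"
      using nth_append_length_plus[of "rev [8..<d+1]" "[3,2,7,6,5,4,1::nat]" k] l by simp
    then show ?thesis using k len assms by simp
  qed
  have "pos ?xs (?xs ! bps d a) = bps d a" using pos_nth[OF dist] nth by blast
  then show ?thesis unfolding pib_def sigma_def using nth by simp
qed

lemma tau_t: "a \<in> {1..d} \<Longrightarrow> pit (tau d) a = a - 1"
  unfolding pit_def tau_def fst_conv by (rule pos_upt)
lemma sigma_t: "a \<in> {1..d} \<Longrightarrow> pit (sigma d) a = a - 1"
  unfolding pit_def sigma_def fst_conv by (rule pos_upt)

lemma tau_ord: assumes "6 \<le> d" "a \<in> {1..d}" "b \<in> {1..d}" "a < b"
  shows "pib (tau d) b < pib (tau d) a \<longleftrightarrow> \<not> (a \<in> {2,3} \<and> b \<in> {4,5})"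
proof -
  have "bpt d b < bpt d a \<longleftrightarrow> \<not> (a \<in> {2,3} \<and> b \<in> {4,5})"
  proof (cases "6 \<le> b")
    case True
    have "bpt d b = d - b" using True by (simp add: bpt_def)
    moreover have "bpt d a > d - b"
    proof (cases "6 \<le> a")
      case True then show ?thesis using assms by (simp add: bpt_def)
    next
      case False
      then have "d - 5 \<le> bpt d a" unfolding bpt_def by (auto intro: diff_le_mono2)
      then show ?thesis using \<open>6 \<le> b\<close> assms by simp
    qed
    ultimately show ?thesis using True by auto
  next
    case False
    then have "a \<in> {1,2,3,4,5}" "b \<in> {1,2,3,4,5}" using assms by auto
    then show ?thesis using assms by (elim insertE emptyE; simp add: bpt_def)
  qed
  then show ?thesis using assms by (simp add: tau_b)
qed

lemma sigma_ord: assumes "8 \<le> d" "a \<in> {1..d}" "b \<in> {1..d}" "a < b"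
  shows "pib (sigma d) b < pib (sigma d) a \<longleftrightarrow> \<not> (a \<in> {2,3} \<and> b \<in> {4,5,6,7})"
proof -
  have "bps d b < bps d a \<longleftrightarrow> \<not> (a \<in> {2,3} \<and> b \<in> {4,5,6,7})"
  proof (cases "8 \<le> b")
    case True
    have "bps d b = d - b" using True by (simp add: bps_def)
    moreover have "bps d a > d - b"
    proof (cases "8 \<le> a")
      case True then show ?thesis using assms by (simp add: bps_def)
    next
      case False
      then have "d - 7 \<le> bps d a" unfolding bps_def by (auto intro: diff_le_mono2)
      then show ?thesis using \<open>8 \<le> b\<close> assms by simp
    qed
    ultimately show ?thesis using True by auto
  next
    case False
    then have "a \<in> {1,2,3,4,5,6,7}" "b \<in> {1,2,3,4,5,6,7}" using assms by auto
    then show ?thesis using assms by (elim insertE emptyE; simp add: bps_def)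
  qed
  then show ?thesis using assms by (simp add: sigma_b)
qed



lemma sumD: "finite D \<Longrightarrow> U \<subseteq> D \<Longrightarrow> (\<Sum>a\<in>D. of_bool (a \<in> U) :: int) = int (card U)"
proof -
  assume "finite D" "U \<subseteq> D"
  then have "D \<inter> {a. a \<in> U} = U" by auto
  then show ?thesis using \<open>finite D\<close> by simp
qed

lemma sum_prod2: "(\<Sum>a\<in>D. \<Sum>b\<in>D. f a * (g b :: int)) = (\<Sum>a\<in>D. f a) * (\<Sum>b\<in>D. g b)"
  by (simp add: sum_product)

lemma sum4:
  fixes D P R U V :: "nat set"
  assumes fin: "finite D" and UD: "U \<subseteq> D" and VD: "V \<subseteq> D" and PD: "P \<subseteq> D" and RD: "R \<subseteq> D"
    and PR: "\<forall>a\<in>P. \<forall>b\<in>R. a < b"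
  shows "(\<Sum>a\<in>D. \<Sum>b\<in>D. of_bool (a\<in>U) * of_bool (b\<in>V) *
      (of_bool (a<b \<and> \<not>(a\<in>P \<and> b\<in>R)) + of_bool (b<a \<and> \<not>(b\<in>P \<and> a\<in>R))) :: int)
    = int (card U) * int (card V) - int (card (U\<inter>V)) - int (card (U\<inter>P)) * int (card (V\<inter>R))
       - int (card (U\<inter>R)) * int (card (V\<inter>P))"
proof -
  have pw: "of_bool (a\<in>U) * of_bool (b\<in>V) *
      (of_bool (a<b \<and> \<not>(a\<in>P \<and> b\<in>R)) + of_bool (b<a \<and> \<not>(b\<in>P \<and> a\<in>R)) :: int)
     = of_bool (a\<in>U) * of_bool (b\<in>V)
       - of_bool (a\<in>U \<and> a\<in>V) * of_bool (a = b)
       - of_bool (a\<in>U \<and> a\<in>P) * of_bool (b\<in>V \<and> b\<in>R)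
       - of_bool (a\<in>U \<and> a\<in>R) * of_bool (b\<in>V \<and> b\<in>P)" for a b
  proof -
    consider "a = b" | "a < b" | "b < a" by arith
    then show ?thesis
    proof cases
      case 1 then show ?thesis using PR by auto
    next
      case 2 then show ?thesis using PR by (auto dest: less_asym)
    next
      case 3 then show ?thesis using PR by (auto dest: less_asym)
    qed
  qed
  have e1: "(\<Sum>a\<in>D. \<Sum>b\<in>D. of_bool (a\<in>U) * (of_bool (b\<in>V) :: int)) = int (card U) * int (card V)"
    using sumD[OF fin UD] sumD[OF fin VD] by (simp only: sum_prod2)
  have e2: "(\<Sum>a\<in>D. \<Sum>b\<in>D. of_bool (a\<in>U \<and> a\<in>V) * (of_bool (a = b) :: int)) = int (card (U\<inter>V))"
  proof -
    have "(\<Sum>a\<in>D. \<Sum>b\<in>D. of_bool (a\<in>U \<and> a\<in>V) * (of_bool (a = b) :: int))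
        = (\<Sum>a\<in>D. of_bool (a\<in>U\<inter>V))"
      using fin by (intro sum.cong) (auto simp: of_bool_def)
    also have "\<dots> = int (card (U\<inter>V))" using sumD[OF fin, of "U\<inter>V"] UD by auto
    finally show ?thesis .
  qed
  have e3: "(\<Sum>a\<in>D. \<Sum>b\<in>D. of_bool (a\<in>U \<and> a\<in>P) * (of_bool (b\<in>V \<and> b\<in>R) :: int))
      = int (card (U\<inter>P)) * int (card (V\<inter>R))"
  proof -
    have h1: "(\<Sum>a\<in>D. of_bool (a\<in>U \<and> a\<in>P)::int) = int (card (U\<inter>P))"
      using sumD[OF fin, of "U\<inter>P"] UD by auto
    have h2: "(\<Sum>a\<in>D. of_bool (a\<in>V \<and> a\<in>R)::int) = int (card (V\<inter>R))"
      using sumD[OF fin, of "V\<inter>R"] VD by auto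
    show ?thesis by (simp only: sum_prod2 h1 h2)
  qed
  have e4: "(\<Sum>a\<in>D. \<Sum>b\<in>D. of_bool (a\<in>U \<and> a\<in>R) * (of_bool (b\<in>V \<and> b\<in>P) :: int))
      = int (card (U\<inter>R)) * int (card (V\<inter>P))"
  proof -
    have h1: "(\<Sum>a\<in>D. of_bool (a\<in>U \<and> a\<in>R)::int) = int (card (U\<inter>R))"
      using sumD[OF fin, of "U\<inter>R"] UD by auto
    have h2: "(\<Sum>a\<in>D. of_bool (a\<in>V \<and> a\<in>P)::int) = int (card (V\<inter>P))"
      using sumD[OF fin, of "V\<inter>P"] VD by auto
    show ?thesis by (simp only: sum_prod2 h1 h2)
  qed
  show ?thesis
    unfolding pw sum_subtractf e1[symmetric] e2[symmetric] e3[symmetric] e4[symmetric] by simp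
qed



definition good :: "nat \<Rightarrow> perm2 \<Rightarrow> nat set \<Rightarrow> bool" where
  "good d p R \<longleftrightarrow> (\<forall>a\<in>{1..d}. pit p a = a - 1) \<and>
     (\<forall>a\<in>{1..d}. \<forall>b\<in>{1..d}. a < b \<longrightarrow> (pib p b < pib p a \<longleftrightarrow> \<not>(a\<in>{2,3} \<and> b\<in>R))) \<and>
     R \<subseteq> {4..d} \<and> R \<noteq> {} \<and> even (card R)"

definition vec :: "nat set \<Rightarrow> nat \<Rightarrow> bool" where "vec U = (\<lambda>a. a \<in> U)"

definition BB :: "nat set \<Rightarrow> nat set \<Rightarrow> nat set \<Rightarrow> bool" where
  "BB R U V \<longleftrightarrow> odd (card U * card V + card (U\<inter>V) + card (U\<inter>{2,3}) * card (V\<inter>R)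
      + card (U\<inter>R) * card (V\<inter>{2,3}))"

definition QQ :: "nat set \<Rightarrow> nat set \<Rightarrow> bool" where
  "QQ R U \<longleftrightarrow> odd (card U * (card U + 1) div 2 + card (U\<inter>{2,3}) * card (U\<inter>R))"

lemma Omega_good:
  assumes g: "good d p R" and a: "a\<in>{1..d}" and b: "b\<in>{1..d}"
  shows "Omega p a b = of_bool (a<b \<and> \<not>(a\<in>{2,3} \<and> b\<in>R)) - of_bool (b<a \<and> \<not>(b\<in>{2,3} \<and> a\<in>R))"
proof -
  have t: "pit p a < pit p b \<longleftrightarrow> a < b" "pit p b < pit p a \<longleftrightarrow> b < a"
    using g a b unfolding good_def by auto
  have o1: "a < b \<Longrightarrow> (pib p b < pib p a \<longleftrightarrow> \<not>(a\<in>{2,3} \<and> b\<in>R))"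
    using g a b unfolding good_def by blast
  have o2: "b < a \<Longrightarrow> (pib p a < pib p b \<longleftrightarrow> \<not>(b\<in>{2,3} \<and> a\<in>R))"
    using g a b unfolding good_def by blast
  consider "a < b" | "a = b" | "b < a" by arith
  then show ?thesis
  proof cases
    case 1 then show ?thesis using t o1 unfolding Omega_def by auto
  next
    case 2 then show ?thesis using t unfolding Omega_def by auto
  next
    case 3 then show ?thesis using t o2 unfolding Omega_def by auto
  qed
qed

lemma good_PR: "good d p R \<Longrightarrow> \<forall>a\<in>{2,3}. \<forall>b\<in>R. a < b"
  unfolding good_def by auto

lemma good_Rsub: "good d p R \<Longrightarrow> R \<subseteq> {1..d}"
  unfolding good_def by auto

lemma good_Psub: "good d p R \<Longrightarrow> {2,3} \<subseteq> {1..d}"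
  unfolding good_def by auto

lemma odd_diff_int: "odd ((a::int) - b) \<longleftrightarrow> odd (a + b)"
  by presburger

lemma odd_aux4: "odd ((a::int) - b - c - e - 2*k) \<longleftrightarrow> odd (a + b + c + e)"
  by presburger

lemma form_vec:
  assumes g: "good d p R" and U: "U \<subseteq> {1..d}" and V: "V \<subseteq> {1..d}"
  shows "form d p (vec U) (vec V) \<longleftrightarrow> BB R U V"
proof -
  let ?D = "{1..d}" and ?P = "{2,3}::nat set"
  define f where "f a b = (of_bool (a\<in>U) * of_bool (b\<in>V) *
      (of_bool (a<b \<and> \<not>(a\<in>?P \<and> b\<in>R)) + of_bool (b<a \<and> \<not>(b\<in>?P \<and> a\<in>R))) :: int)" for a b
  define h where "h a b = (of_bool (a\<in>U) * of_bool (b\<in>V) * of_bool (b<a \<and> \<not>(b\<in>?P \<and> a\<in>R)) :: int)" for a b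
  have pw: "of_bool (vec U a) * Omega p a b * of_bool (vec V b) = f a b - 2 * h a b"
    if "a \<in> ?D" "b \<in> ?D" for a b
    unfolding Omega_good[OF g that] f_def h_def vec_def
    by (cases "a\<in>U"; cases "b\<in>V"; cases "a<b \<and> \<not>(a\<in>?P \<and> b\<in>R)"; cases "b<a \<and> \<not>(b\<in>?P \<and> a\<in>R)"; simp)
  have "(\<Sum>a\<in>?D. \<Sum>b\<in>?D. of_bool (vec U a) * Omega p a b * of_bool (vec V b))
      = (\<Sum>a\<in>?D. \<Sum>b\<in>?D. f a b - 2 * h a b)"
    using pw by (intro sum.cong refl) auto
  also have "\<dots> = (\<Sum>a\<in>?D. \<Sum>b\<in>?D. f a b) - 2 * (\<Sum>a\<in>?D. \<Sum>b\<in>?D. h a b)"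
    by (simp add: sum_subtractf sum_distrib_left)
  finally have S: "(\<Sum>a\<in>?D. \<Sum>b\<in>?D. of_bool (vec U a) * Omega p a b * of_bool (vec V b))
      = (\<Sum>a\<in>?D. \<Sum>b\<in>?D. f a b) - 2 * (\<Sum>a\<in>?D. \<Sum>b\<in>?D. h a b)" .
  have F: "(\<Sum>a\<in>?D. \<Sum>b\<in>?D. f a b) = int (card U) * int (card V) - int (card (U\<inter>V))
       - int (card (U\<inter>?P)) * int (card (V\<inter>R)) - int (card (U\<inter>R)) * int (card (V\<inter>?P))"
    unfolding f_def by (rule sum4[OF _ U V good_Psub[OF g] good_Rsub[OF g] good_PR[OF g]]) simp
  show ?thesis unfolding form_def BB_def S F odd_aux4
    by (simp only: of_nat_mult[symmetric] of_nat_add[symmetric] even_of_nat)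
qed

lemma Qf_vec:
  assumes g: "good d p R" and U: "U \<subseteq> {1..d}"
  shows "Qf d p (vec U) \<longleftrightarrow> QQ R U"
proof -
  let ?D = "{1..d}" and ?P = "{2,3}::nat set"
  define f where "f a b = (of_bool (a\<in>U) * of_bool (b\<in>U) *
      (of_bool (a<b \<and> \<not>(a\<in>?P \<and> b\<in>R)) + of_bool (b<a \<and> \<not>(b\<in>?P \<and> a\<in>R))) :: int)" for a b
  define h where "h a b = (of_bool (a\<in>U) * of_bool (b\<in>U) * of_bool (a<b \<and> \<not>(a\<in>?P \<and> b\<in>R)) :: int)" for a b
  have pw: "(if pit p a < pit p b then of_bool (vec U a) * Omega p a b * of_bool (vec U b) else 0) = h a b"
    if "a \<in> ?D" "b \<in> ?D" for a b
  proof -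
    have "pit p a < pit p b \<longleftrightarrow> a < b" using g that unfolding good_def by auto
    then show ?thesis using Omega_good[OF g that] unfolding h_def vec_def by auto
  qed
  have T1: "(\<Sum>a\<in>?D. \<Sum>b\<in>?D. if pit p a < pit p b then of_bool (vec U a) * Omega p a b * of_bool (vec U b) else 0)
      = (\<Sum>a\<in>?D. \<Sum>b\<in>?D. h a b)"
    using pw by (intro sum.cong refl) auto
  have sw: "(\<Sum>a\<in>?D. \<Sum>b\<in>?D. h b a) = (\<Sum>a\<in>?D. \<Sum>b\<in>?D. h a b)"
    by (rule sum.swap)
  have "(\<Sum>a\<in>?D. \<Sum>b\<in>?D. f a b) = (\<Sum>a\<in>?D. \<Sum>b\<in>?D. h a b + h b a)"
    unfolding f_def h_def by (intro sum.cong refl) (simp add: algebra_simps)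
  also have "\<dots> = 2 * (\<Sum>a\<in>?D. \<Sum>b\<in>?D. h a b)"
    using sw by (simp add: sum.distrib)
  finally have F2: "2 * (\<Sum>a\<in>?D. \<Sum>b\<in>?D. h a b) = (\<Sum>a\<in>?D. \<Sum>b\<in>?D. f a b)" by simp
  have F: "(\<Sum>a\<in>?D. \<Sum>b\<in>?D. f a b) = int (card U) * int (card U) - int (card (U\<inter>U))
       - int (card (U\<inter>?P)) * int (card (U\<inter>R)) - int (card (U\<inter>R)) * int (card (U\<inter>?P))"
    unfolding f_def by (rule sum4[OF _ U U good_Psub[OF g] good_Rsub[OF g] good_PR[OF g]]) simp
  have M: "(\<Sum>a\<in>?D. of_bool (vec U a) :: int) = int (card U)"
    using sumD[of ?D U] U unfolding vec_def by simp
  define m where "m = card U"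
  define x where "x = card (U\<inter>?P)"
  define y where "y = card (U\<inter>R)"
  define T where "T = (\<Sum>a\<in>?D. \<Sum>b\<in>?D. h a b)"
  have h2: "2 * T = int m * int m - int m - 2 * int x * int y"
    using F2 F unfolding T_def m_def x_def y_def by simp
  have ev: "2 * int (m * (m + 1) div 2) = int m * (int m + 1)"
  proof -
    have "even (m * (m+1))" by simp
    then have "2 * (m * (m + 1) div 2) = m * (m+1)" by simp
    then show ?thesis by (metis of_nat_add of_nat_mult of_nat_1 of_nat_numeral)
  qed
  have key: "T + int m = int (m * (m + 1) div 2) - int x * int y"
    using h2 ev by (simp add: algebra_simps)
  have "odd (T + int m) \<longleftrightarrow> odd (int (m * (m + 1) div 2) + int x * int y)"
    unfolding key by (rule odd_diff_int)
  also have "\<dots> \<longleftrightarrow> odd (m * (m + 1) div 2 + x * y)"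
    by (simp only: of_nat_mult[symmetric] of_nat_add[symmetric] even_of_nat)
  finally show ?thesis unfolding Qf_def QQ_def T1 M
    unfolding T_def m_def x_def y_def .
qed



definition sd :: "nat set \<Rightarrow> nat set \<Rightarrow> nat set" where "sd U V = (U - V) \<union> (V - U)"

lemma sd_card: "finite U \<Longrightarrow> finite V \<Longrightarrow> card (sd U V) + 2 * card (U \<inter> V) = card U + card V"
proof -
  assume f: "finite U" "finite V"
  have "card (sd U V) = card (U - V) + card (V - U)"
    unfolding sd_def using f by (intro card_Un_disjoint) auto
  moreover have "card (U - V) + card (U \<inter> V) = card U"
  proof -
    have "U = (U - V) \<union> (U \<inter> V)" "(U - V) \<inter> (U \<inter> V) = {}" by auto
    then show ?thesis using f card_Un_disjoint[of "U - V" "U \<inter> V"] by simp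
  qed
  moreover have "card (V - U) + card (U \<inter> V) = card V"
  proof -
    have "V = (V - U) \<union> (U \<inter> V)" "(V - U) \<inter> (U \<inter> V) = {}" by auto
    then show ?thesis using f card_Un_disjoint[of "V - U" "U \<inter> V"] by simp
  qed
  ultimately show ?thesis by simp
qed

lemma sd_Int: "sd U V \<inter> W = sd (U \<inter> W) (V \<inter> W)"
  unfolding sd_def by auto

lemma sd_card_Int: "finite U \<Longrightarrow> finite V \<Longrightarrow>
   card (sd U V \<inter> W) + 2 * card (U \<inter> V \<inter> W) = card (U \<inter> W) + card (V \<inter> W)"
proof -
  assume f: "finite U" "finite V"
  have "U \<inter> V \<inter> W = (U \<inter> W) \<inter> (V \<inter> W)" by auto
  then show ?thesis unfolding sd_Int using sd_card[of "U\<inter>W" "V\<inter>W"] f by simp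
qed

lemma oddadd: "odd ((X::nat) + Y) \<longleftrightarrow> (odd X \<noteq> odd Y)" by auto

lemma par_eq: "(a::int) + 2 * k = b \<Longrightarrow> odd a \<longleftrightarrow> odd b" by presburger

lemma par3: "odd ((X::int) + Y + Z + 2 * W) \<longleftrightarrow> ((odd X \<noteq> odd Y) \<noteq> odd Z)"
  by presburger

lemma pol_arith:
  fixes a b c s xa xb xc xs ya yb yc ys :: nat
  assumes "s + 2*c = a + b" "xs + 2*xc = xa + xb" "ys + 2*yc = ya + yb"
  shows "odd (s*(s+1) div 2 + xs*ys) \<longleftrightarrow>
    ((odd (a*(a+1) div 2 + xa*ya) \<noteq> odd (b*(b+1) div 2 + xb*yb)) \<noteq> odd (a*b + c + xa*yb + ya*xb))"
proof -
  have h2: "\<And>n::nat. 2 * int (n*(n+1) div 2) = int n * (int n + 1)"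
  proof -
    fix n :: nat
    have "even (n * (n+1))" by simp
    then have "2 * (n * (n + 1) div 2) = n * (n+1)" by simp
    then show "2 * int (n*(n+1) div 2) = int n * (int n + 1)" by (metis of_nat_add of_nat_mult of_nat_1 of_nat_numeral)
  qed
  define S where "S = int (s*(s+1) div 2)"
  define A where "A = int (a*(a+1) div 2)"
  define B where "B = int (b*(b+1) div 2)"
  have s: "int s = int a + int b - 2 * int c" using assms(1) by linarith
  have xs: "int xs = int xa + int xb - 2 * int xc" using assms(2) by linarith
  have ys: "int ys = int ya + int yb - 2 * int yc" using assms(3) by linarith
  have hS: "2 * S = int s * (int s + 1)" unfolding S_def by (rule h2)
  have hA: "2 * A = int a * (int a + 1)" unfolding A_def by (rule h2)
  have hB: "2 * B = int b * (int b + 1)" unfolding B_def by (rule h2)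
  have PP: "int s * (int s + 1) = int a * (int a + 1) + int b * (int b+1)
     + 2*(int a*int b + int c - 2*int c - 2*int c*(int a+int b) + 2*int c*int c)"
    unfolding s by (simp add: algebra_simps)
  define X where "X = int a*int b + int c - 2*int c - 2*int c*(int a+int b) + 2*int c*int c"
  have "2 * S = 2 * A + 2 * B + 2 * X" unfolding hS hA hB PP X_def by simp
  then have SS: "S = A + B + int a * int b + int c - 2 * int c - 2 * int c * (int a + int b) + 2 * int c * int c"
    unfolding X_def by simp
  define W where "W = - int c - int c * (int a + int b) + int c * int c
     - int xc * (int ya + int yb) - int yc * (int xa + int xb) + 2 * int xc * int yc"
  have E: "S + int xs * int ys = (A + int xa * int ya) + (B + int xb * int yb)
     + (int a * int b + int c + int xa * int yb + int ya * int xb) + 2 * W"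
    unfolding SS xs ys W_def by (simp add: algebra_simps)
  have "odd (s*(s+1) div 2 + xs*ys) \<longleftrightarrow> odd (S + int xs * int ys)"
    unfolding S_def by (simp only: of_nat_mult[symmetric] of_nat_add[symmetric] even_of_nat)
  also have "\<dots> \<longleftrightarrow> ((odd (A + int xa * int ya) \<noteq> odd (B + int xb * int yb)) \<noteq>
       odd (int a * int b + int c + int xa * int yb + int ya * int xb))"
    unfolding E by (rule par3)
  also have "\<dots> \<longleftrightarrow> ((odd (a*(a+1) div 2 + xa*ya) \<noteq> odd (b*(b+1) div 2 + xb*yb)) \<noteq> odd (a*b + c + xa*yb + ya*xb))"
    unfolding A_def B_def by (simp only: of_nat_mult[symmetric] of_nat_add[symmetric] even_of_nat)
  finally show ?thesis .
qed

lemma QQ_sd: "finite U \<Longrightarrow> finite V \<Longrightarrow> QQ R (sd U V) \<longleftrightarrow> ((QQ R U \<noteq> QQ R V) \<noteq> BB R U V)"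
  unfolding QQ_def BB_def
  by (rule pol_arith[OF sd_card sd_card_Int sd_card_Int]) auto

lemma BB_sd: "finite U \<Longrightarrow> finite V \<Longrightarrow> BB R (sd U V) W \<longleftrightarrow> (BB R U W \<noteq> BB R V W)"
proof -
  assume f: "finite U" "finite V"
  define a b c where "a = card U" "b = card V" "c = card (U\<inter>V)"
  define i j k where "i = card (U\<inter>W)" "j = card (V\<inter>W)" "k = card (U\<inter>V\<inter>W)"
  define xa xb xc where "xa = card (U\<inter>{2,3})" "xb = card (V\<inter>{2,3})" "xc = card (U\<inter>V\<inter>{2,3})"
  define ya yb yc where "ya = card (U\<inter>R)" "yb = card (V\<inter>R)" "yc = card (U\<inter>V\<inter>R)"
  have e1: "card (sd U V) + 2*c = a + b" using sd_card[OF f] unfolding a_b_c_def .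
  have e2: "card (sd U V \<inter> W) + 2*k = i + j" using sd_card_Int[OF f] unfolding i_j_k_def .
  have e3: "card (sd U V \<inter> {2,3}) + 2*xc = xa + xb" using sd_card_Int[OF f] unfolding xa_xb_xc_def .
  have e4: "card (sd U V \<inter> R) + 2*yc = ya + yb" using sd_card_Int[OF f] unfolding ya_yb_yc_def .
  have "odd (card (sd U V) * card W + card (sd U V \<inter> W) + card (sd U V \<inter> {2,3}) * card (W\<inter>R)
      + card (sd U V \<inter> R) * card (W \<inter> {2,3}))
    \<longleftrightarrow> (odd (a*card W + i + xa * card (W\<inter>R) + ya * card (W\<inter>{2,3}))
           \<noteq> odd (b*card W + j + xb * card (W\<inter>R) + yb * card (W\<inter>{2,3})))"
  proof -
    define w p q where "w = card W" "p = card (W\<inter>R)" "q = card (W\<inter>{2,3})"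
    have "int (card (sd U V) * w + card (sd U V \<inter> W) + card (sd U V \<inter> {2,3}) * p
      + card (sd U V \<inter> R) * q) + 2 * (int c * int w + int k + int xc * int p + int yc * int q)
      = int ((a*w + i + xa * p + ya * q) + (b*w + j + xb * p + yb * q))"
    proof -
      have "int (card (sd U V)) = int a + int b - 2 * int c" using e1 by linarith
      moreover have "int (card (sd U V \<inter> W)) = int i + int j - 2 * int k" using e2 by linarith
      moreover have "int (card (sd U V \<inter> {2,3})) = int xa + int xb - 2 * int xc" using e3 by linarith
      moreover have "int (card (sd U V \<inter> R)) = int ya + int yb - 2 * int yc" using e4 by linarith
      ultimately show ?thesis by (simp only: of_nat_add of_nat_mult) (simp add: algebra_simps)
    qed
    then have "odd (int (card (sd U V) * w + card (sd U V \<inter> W) + card (sd U V \<inter> {2,3}) * p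
      + card (sd U V \<inter> R) * q)) \<longleftrightarrow> odd (int ((a*w + i + xa * p + ya * q) + (b*w + j + xb * p + yb * q)))"
      by (rule par_eq)
    then have "odd (card (sd U V) * w + card (sd U V \<inter> W) + card (sd U V \<inter> {2,3}) * p
      + card (sd U V \<inter> R) * q) \<longleftrightarrow> odd ((a*w + i + xa * p + ya * q) + (b*w + j + xb * p + yb * q))"
      by (simp only: even_of_nat)
    then show ?thesis unfolding w_p_q_def[symmetric] oddadd .

  qed
  then show ?thesis unfolding BB_def a_b_c_def i_j_k_def xa_xb_xc_def ya_yb_yc_def .
qed

lemma BB_self: "\<not> BB R V V"
  unfolding BB_def by auto

lemma BB_sym: "BB R U V = BB R V U"
  unfolding BB_def by (simp add: algebra_simps Int_commute)



lemma vec_Collect: "vec (Collect u) = u" unfolding vec_def by auto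

lemma vec_inj: "vec U = vec V \<longleftrightarrow> U = V" unfolding vec_def by (metis Collect_mem_eq)

lemma vec_vecs: "vec U \<in> vecs d \<longleftrightarrow> U \<subseteq> {1..d}" unfolding vecs_def vec_def by auto

lemma vecs_vec: "u \<in> vecs d \<Longrightarrow> \<exists>U. U \<subseteq> {1..d} \<and> u = vec U"
  using vec_Collect vec_vecs by metis

lemma vadd_vec: "vadd (vec U) (vec V) = vec (sd U V)"
  unfolding vadd_def vec_def sd_def by auto

lemma evec_vec: "evec b = vec {b}" unfolding evec_def vec_def by auto

lemma sd_sd: "sd (sd U V) V = U" unfolding sd_def by auto

lemma NS_vec: "good d p R \<Longrightarrow> U \<subseteq> {1..d} \<Longrightarrow> vec U \<in> NS d p \<longleftrightarrow> QQ R U"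
  unfolding NS_def using vec_vecs Qf_vec by auto

lemma ker_vec: assumes g: "good d p R" and U: "U \<subseteq> {1..d}"
  shows "vec U \<in> kerO d p \<longleftrightarrow> (\<forall>V\<subseteq>{1..d}. \<not> BB R U V)"
proof
  assume k: "vec U \<in> kerO d p"
  show "\<forall>V\<subseteq>{1..d}. \<not> BB R U V"
  proof (intro allI impI)
    fix V assume V: "V \<subseteq> {1..d}"
    have "vec V \<in> vecs d" using V vec_vecs by blast
    then have "\<not> form d p (vec U) (vec V)" using k unfolding kerO_def by blast
    then show "\<not> BB R U V" using form_vec[OF g U V] by blast
  qed
next
  assume h: "\<forall>V\<subseteq>{1..d}. \<not> BB R U V"
  have "\<forall>v\<in>vecs d. \<not> form d p (vec U) v"
  proof
    fix v assume "v \<in> vecs d"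
    then obtain V where V: "V \<subseteq> {1..d}" "v = vec V" using vecs_vec by blast
    show "\<not> form d p (vec U) v" using form_vec[OF g U V(1)] h V by blast
  qed
  moreover have "vec U \<in> vecs d" using U vec_vecs by blast
  ultimately show "vec U \<in> kerO d p" unfolding kerO_def by blast
qed

lemma clos_base: "Y \<subseteq> Qclosure d p Y" unfolding Qclosure_def by auto

lemma clos_add: "v \<in> Qclosure d p Y \<Longrightarrow> w \<in> Qclosure d p Y \<Longrightarrow> Qf d p (vadd v w) \<Longrightarrow> vadd v w \<in> Qclosure d p Y"
  unfolding Qclosure_def Qclosed_def by auto

lemma clos_min: "Qclosed d p X \<Longrightarrow> Y \<subseteq> X \<Longrightarrow> Qclosure d p Y \<subseteq> X"
  unfolding Qclosure_def by auto

abbreviation CC where "CC d p \<equiv> Qclosure d p (evec ` {1..d})"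

lemma CC_single: "b \<in> {1..d} \<Longrightarrow> vec {b} \<in> CC d p"
  using clos_base evec_vec by (metis image_subset_iff)

lemma move: assumes g: "good d p R" and U: "U \<subseteq> {1..d}" and b: "b \<in> {1..d}" and Q: "QQ R U"
  and C: "vec (sd U {b}) \<in> CC d p" shows "vec U \<in> CC d p"
proof -
  have "vadd (vec (sd U {b})) (vec {b}) = vec U" unfolding vadd_vec sd_sd ..
  moreover have "Qf d p (vec U)" using Qf_vec[OF g U] Q by simp
  ultimately show ?thesis using clos_add[OF C CC_single[OF b]] by simp
qed

lemma fin_sub: "U \<subseteq> {1..(d::nat)} \<Longrightarrow> finite U" by (erule finite_subset) simp

lemma QQ_single: "good d p R \<Longrightarrow> QQ R {b}"
  unfolding QQ_def good_def by (cases "b \<in> R"; auto)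

lemma inv_move: assumes g: "good d p R" and U: "U \<subseteq> {1..d}" and t: "BB R U {b}"
  shows "QQ R (sd U {b}) \<longleftrightarrow> QQ R U" and "BB R (sd U {b}) {b}"
proof -
  have f: "finite U" using U by (rule fin_sub)
  show "QQ R (sd U {b}) \<longleftrightarrow> QQ R U" using QQ_sd[OF f, of "{b}" R] QQ_single[OF g] t by auto
  show "BB R (sd U {b}) {b}" using BB_sd[OF f, of "{b}" R "{b}"] BB_self t by auto
qed

lemma BB_single: "finite U \<Longrightarrow> BB R U {b} \<longleftrightarrow>
  odd (card U + of_bool (b \<in> U) + (if b \<in> R then card (U \<inter> {2,3}) else 0) + (if b \<in> {2,3} then card (U \<inter> R) else 0))"
proof -
  have "card (U \<inter> {b}) = of_bool (b \<in> U)" by (cases "b\<in>U") auto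
  moreover have "card ({b} \<inter> R) = of_bool (b \<in> R)" by (cases "b\<in>R") auto
  moreover have "card ({b} \<inter> {2,3}) = of_bool (b \<in> {2,3})" by (cases "b\<in>{2,3}") auto
  ultimately show ?thesis unfolding BB_def by simp
qed



definition mu :: "nat \<Rightarrow> nat set \<Rightarrow> nat set \<Rightarrow> nat" where
  "mu d R U = (d + 1) * card (U \<inter> ({1..d} - {2,3} - R)) + card U"

lemma sd_in: "b \<in> U \<Longrightarrow> sd U {b} = U - {b}" unfolding sd_def by auto
lemma sd_out: "b \<notin> U \<Longrightarrow> sd U {b} = insert b U" unfolding sd_def by auto

lemma walk: assumes g: "good d p R" and U: "U \<subseteq> {1..d}" and b: "b \<in> {1..d}"
  and t: "BB R U {b}" and Q: "QQ R U"
  and nxt: "QQ R (sd U {b}) \<Longrightarrow> BB R (sd U {b}) {b} \<Longrightarrow> sd U {b} \<subseteq> {1..d} \<Longrightarrow> vec (sd U {b}) \<in> CC d p"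
  shows "vec U \<in> CC d p"
proof -
  have "sd U {b} \<subseteq> {1..d}" using U b unfolding sd_def by auto
  then show ?thesis using move[OF g U b Q] nxt inv_move[OF g U t] Q by auto
qed

lemma good_facts: assumes "good d p R"
  shows "{2,3} \<inter> R = {}" "R \<subseteq> {1..d}" "{2,3} \<subseteq> {1..d}" "R \<noteq> {}" "even (card R)" "finite R"
  using assms unfolding good_def by (auto intro: finite_subset)

lemma card_split: assumes g: "good d p R" and U: "U \<subseteq> {1..d}"
  shows "card U = card (U \<inter> ({1..d} - {2,3} - R)) + card (U \<inter> {2,3}) + card (U \<inter> R)"
proof -
  have f: "finite U" using U by (rule fin_sub)
  have e: "U = (U \<inter> ({1..d} - {2,3} - R)) \<union> (U \<inter> {2,3}) \<union> (U \<inter> R)" using U by auto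
  have "card ((U \<inter> ({1..d} - {2,3} - R)) \<union> (U \<inter> {2,3}) \<union> (U \<inter> R))
      = card ((U \<inter> ({1..d} - {2,3} - R)) \<union> (U \<inter> {2,3})) + card (U \<inter> R)"
    using f good_facts(1)[OF g] by (intro card_Un_disjoint) auto
  also have "card ((U \<inter> ({1..d} - {2,3} - R)) \<union> (U \<inter> {2,3}))
      = card (U \<inter> ({1..d} - {2,3} - R)) + card (U \<inter> {2,3})"
    using f by (intro card_Un_disjoint) auto
  finally show ?thesis using e by simp
qed



lemma cdiff: "finite A \<Longrightarrow> c \<in> A \<Longrightarrow> card (A - {c}) + 1 = card A"
  by (metis One_nat_def Suc_pred card_Diff_singleton card_gt_0_iff empty_iff Suc_eq_plus1)

lemma mu_lt: "a + 1 = (b::nat) \<Longrightarrow> m' \<le> m \<Longrightarrow> (d+1)*a + m' < (d+1)*b + m"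
proof -
  assume b: "a + 1 = b" "m' \<le> m"
  have "(d+1)*b = (d+1)*a + (d+1)" unfolding b(1)[symmetric] by (simp add: algebra_simps)
  then show ?thesis using \<open>m' \<le> m\<close> by linarith
qed

lemma c_remove:
  assumes g: "good d p R" and U: "U \<subseteq> {1..d}" and b: "b \<in> U" and t: "BB R U {b}" and Q: "QQ R U"
    and IH: "\<And>U'. mu d R U' < mu d R U \<Longrightarrow> U' \<subseteq> {1..d} \<Longrightarrow> QQ R U' \<Longrightarrow> (\<exists>V\<subseteq>{1..d}. BB R U' V) \<Longrightarrow> vec U' \<in> CC d p"
  shows "vec U \<in> CC d p"
proof (rule walk[OF g U _ t Q])
  show bD: "b \<in> {1..d}" using U b by auto
  assume q: "QQ R (sd U {b})" and t': "BB R (sd U {b}) {b}" and s: "sd U {b} \<subseteq> {1..d}"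
  have f: "finite U" using U by (rule fin_sub)
  have "mu d R (sd U {b}) < mu d R U"
  proof -
    have "card (sd U {b} \<inter> ({1..d} - {2,3} - R)) \<le> card (U \<inter> ({1..d} - {2,3} - R))"
      using f unfolding sd_in[OF b] by (intro card_mono) auto
    moreover have "card (sd U {b}) < card U" unfolding sd_in[OF b] using f b by (rule card_Diff1_less)
    ultimately show ?thesis unfolding mu_def
      by (meson add_le_less_mono mult_le_mono2)
  qed
  then show "vec (sd U {b}) \<in> CC d p" using IH s q t' bD by blast
qed

lemma c_swap:
  assumes g: "good d p R" and U: "U \<subseteq> {1..d}" and gU: "c \<in> U" and gG: "c \<in> {1..d} - {2,3} - R"
    and pi: "\<pi> \<in> {2,3} \<union> R" and piU: "\<pi> \<notin> U" and t: "BB R U {\<pi>}" and Q: "QQ R U"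
    and modd: "odd (card U)"
    and IH: "\<And>U'. mu d R U' < mu d R U \<Longrightarrow> U' \<subseteq> {1..d} \<Longrightarrow> QQ R U' \<Longrightarrow> (\<exists>V\<subseteq>{1..d}. BB R U' V) \<Longrightarrow> vec U' \<in> CC d p"
  shows "vec U \<in> CC d p"
proof -
  have f: "finite U" using U by (rule fin_sub)
  have piD: "\<pi> \<in> {1..d}" using pi good_facts[OF g] by auto
  show ?thesis
  proof (rule walk[OF g U piD t Q])
    assume q1: "QQ R (sd U {\<pi>})" and s1: "sd U {\<pi>} \<subseteq> {1..d}"
    define U1 where "U1 = sd U {\<pi>}"
    have U1: "U1 = insert \<pi> U" unfolding U1_def by (rule sd_out[OF piU])
    have cD: "c \<in> {1..d}" using gG by auto
    have t1: "BB R U1 {c}"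
      using BB_single[of U1 R c] f gG gU modd piU unfolding U1 by auto
    show "vec (sd U {\<pi>}) \<in> CC d p" unfolding U1_def[symmetric]
    proof (rule walk[OF g _ cD t1])
      show "U1 \<subseteq> {1..d}" "QQ R U1" using s1 q1 unfolding U1_def by auto
      assume q2: "QQ R (sd U1 {c})" and t2: "BB R (sd U1 {c}) {c}" and s2: "sd U1 {c} \<subseteq> {1..d}"
      have cU1: "c \<in> U1" using gU U1 by auto
      have e: "sd U1 {c} \<inter> ({1..d} - {2,3} - R) = (U \<inter> ({1..d} - {2,3} - R)) - {c}"
        unfolding sd_in[OF cU1] unfolding U1 using pi by auto
      have "card (sd U1 {c}) = card U" unfolding sd_in[OF cU1] unfolding U1 using f piU gU by auto
      moreover have "card (sd U1 {c} \<inter> ({1..d} - {2,3} - R)) + 1 = card (U \<inter> ({1..d} - {2,3} - R))"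
        unfolding e using cdiff[of "U \<inter> ({1..d} - {2,3} - R)" c] f gU gG by simp
      ultimately have "mu d R (sd U1 {c}) < mu d R U" unfolding mu_def by (intro mu_lt) auto
      then show "vec (sd U1 {c}) \<in> CC d p" using IH s2 q2 t2 cD by blast
    qed
  qed
qed



lemma c_full:
  assumes g: "good d p R" and U: "U \<subseteq> {1..d}" and PR: "{2,3} \<union> R \<subseteq> U"
    and gU: "c \<in> U" and gG: "c \<in> {1..d} - {2,3} - R"
    and hU: "h \<notin> U" and hG: "h \<in> {1..d} - {2,3} - R"
    and rho: "\<rho> \<in> R" and Q: "QQ R U" and modd: "odd (card U)"
    and IH: "\<And>U'. mu d R U' < mu d R U \<Longrightarrow> U' \<subseteq> {1..d} \<Longrightarrow> QQ R U' \<Longrightarrow> (\<exists>V\<subseteq>{1..d}. BB R U' V) \<Longrightarrow> vec U' \<in> CC d p"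
  shows "vec U \<in> CC d p"
proof -
  have f: "finite U" using U by (rule fin_sub)
  have fR: "finite R" using good_facts[OF g] by auto
  have evR: "even (card R)" using good_facts[OF g] by auto
  have hD: "h \<in> {1..d}" and cD: "c \<in> {1..d}" using hG gG by auto
  have rD: "\<rho> \<in> {1..d}" and twoD: "(2::nat) \<in> {1..d}" using rho good_facts[OF g] by auto
  have r23: "\<rho> \<noteq> 2" "\<rho> \<noteq> 3" using rho good_facts(1)[OF g] by auto
  have cne: "c \<noteq> 2" "c \<noteq> 3" "c \<notin> R" "h \<noteq> 2" "h \<noteq> 3" "h \<notin> R" "c \<noteq> \<rho>" "h \<noteq> \<rho>" "c \<noteq> h"
    using gG hG rho gU hU by auto
  have in23: "2 \<in> U" "3 \<in> U" "\<rho> \<in> U" using PR rho by auto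
  define G where "G = {1..d} - {2,3} - R"
  define U1 where "U1 = insert h U"
  define U2 where "U2 = U1 - {2}"
  define U3 where "U3 = U2 - {\<rho>}"
  define U4 where "U4 = U3 - {c}"
  have m3: "card U \<ge> 3"
  proof -
    have "{2,3,c} \<subseteq> U" using in23 gU by auto
    then have "card {2,3,c} \<le> card U" using f by (rule card_mono[rotated])
    then show ?thesis using cne by simp
  qed
  have cU1: "card U1 = card U + 1" unfolding U1_def using f hU by simp
  have cU2: "card U2 = card U" unfolding U2_def using cU1 f in23 unfolding U1_def by simp
  have cU3: "card U3 = card U - 1" unfolding U3_def U2_def U1_def using f in23 r23 cne hU by simp
  have cU4: "card U4 = card U - 2" unfolding U4_def U3_def U2_def U1_def using f in23 r23 cne hU gU by (simp add: numeral_2_eq_2)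
  have RU1: "U1 \<inter> R = R" unfolding U1_def using PR by auto
  have PU2: "U2 \<inter> {2,3} = {3}" unfolding U2_def U1_def using PR cne by auto
  have s1: "sd U {h} = U1" unfolding U1_def by (rule sd_out[OF hU])
  have s2: "sd U1 {2} = U2" unfolding U2_def by (rule sd_in) (simp add: U1_def in23)
  have s3: "sd U2 {\<rho>} = U3" unfolding U3_def by (rule sd_in) (simp add: U2_def U1_def in23 r23)
  have s4: "sd U3 {c} = U4" unfolding U4_def by (rule sd_in) (simp add: U3_def U2_def U1_def gU cne)
  have fU1: "finite U1" "finite U2" "finite U3" unfolding U3_def U2_def U1_def using f by auto
  have t1: "BB R U {h}" using BB_single[OF f, of R h] hU cne modd by simp
  have t2: "BB R U1 {2}" using BB_single[OF fU1(1), of R 2] RU1 cU1 modd evR good_facts(1)[OF g]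
    by (simp add: U1_def in23)
  have t3: "BB R U2 {\<rho>}" using BB_single[OF fU1(2), of R \<rho>] PU2 cU2 modd rho r23 cU1[unfolded U1_def]
    by (simp add: U2_def U1_def in23)
  have t4: "BB R U3 {c}" using BB_single[OF fU1(3), of R c] cU3 modd cne m3
    by (simp add: U3_def U2_def U1_def gU)
  have muU4: "mu d R U4 < mu d R U"
  proof -
    have e: "U4 \<inter> G = insert h (U \<inter> G) - {c}"
      unfolding U4_def U3_def U2_def U1_def G_def using rho cne hG by auto
    have "card (U4 \<inter> G) = card (U \<inter> G)" unfolding e using f hU gU gG hG
      by (simp add: G_def)
    then show ?thesis unfolding mu_def G_def[symmetric] using cU4 m3 by simp
  qed
  show ?thesis
  proof (rule walk[OF g U hD t1 Q])
    assume q1: "QQ R (sd U {h})" and ss1: "sd U {h} \<subseteq> {1..d}"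
    show "vec (sd U {h}) \<in> CC d p" unfolding s1
    proof (rule walk[OF g _ twoD t2])
      show "U1 \<subseteq> {1..d}" "QQ R U1" using q1 ss1 s1 by auto
      assume q2: "QQ R (sd U1 {2})" and ss2: "sd U1 {2} \<subseteq> {1..d}"
      show "vec (sd U1 {2}) \<in> CC d p" unfolding s2
      proof (rule walk[OF g _ rD t3])
        show "U2 \<subseteq> {1..d}" "QQ R U2" using q2 ss2 s2 by auto
        assume q3: "QQ R (sd U2 {\<rho>})" and ss3: "sd U2 {\<rho>} \<subseteq> {1..d}"
        show "vec (sd U2 {\<rho>}) \<in> CC d p" unfolding s3
        proof (rule walk[OF g _ cD t4])
          show "U3 \<subseteq> {1..d}" "QQ R U3" using q3 ss3 s3 by auto
          assume q4: "QQ R (sd U3 {c})" and t4': "BB R (sd U3 {c}) {c}" and ss4: "sd U3 {c} \<subseteq> {1..d}"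
          show "vec (sd U3 {c}) \<in> CC d p" unfolding s4
            using IH[OF muU4] q4 t4' ss4 cD unfolding s4 by blast
        qed
      qed
    qed
  qed
qed



lemma core:
  assumes g: "good d p R" and r4: "card R \<le> 4"
    and cB: "\<And>U. U \<subseteq> {2,3} \<union> R \<Longrightarrow> card (U \<inter> {2,3}) = 1 \<Longrightarrow> card (U \<inter> R) = 3 \<Longrightarrow> QQ R U \<Longrightarrow> vec U \<in> CC d p"
  shows "U \<subseteq> {1..d} \<Longrightarrow> QQ R U \<Longrightarrow> (\<exists>V\<subseteq>{1..d}. BB R U V) \<Longrightarrow> vec U \<in> CC d p"
proof (induction "mu d R U" arbitrary: U rule: less_induct)
  case less
  have IH: "\<And>U'. mu d R U' < mu d R U \<Longrightarrow> U' \<subseteq> {1..d} \<Longrightarrow> QQ R U' \<Longrightarrow> (\<exists>V\<subseteq>{1..d}. BB R U' V) \<Longrightarrow> vec U' \<in> CC d p"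
    using less.hyps by blast
  have U: "U \<subseteq> {1..d}" and Q: "QQ R U" and W: "\<exists>V\<subseteq>{1..d}. BB R U V" using less.prems by auto
  have f: "finite U" using U by (rule fin_sub)
  have fR: "finite R" and evR: "even (card R)" and PR0: "{2,3} \<inter> R = {}" and RD: "R \<subseteq> {1..d}"
    and PD: "{2,3} \<subseteq> {1..d}" and Rne: "R \<noteq> {}"
    using good_facts[OF g] by auto
  define G where "G = {1..d} - {2,3} - R"
  define m where "m = card U"
  define x where "x = card (U \<inter> {2,3})"
  define y where "y = card (U \<inter> R)"
  define n where "n = card (U \<inter> G)"
  have split: "m = n + x + y" using card_split[OF g U] unfolding m_def n_def x_def y_def G_def by simp
  have BG: "BB R U {b} \<longleftrightarrow> odd (m + of_bool (b \<in> U))" if "b \<in> G" for b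
    using BB_single[OF f, of R b] that unfolding G_def m_def by auto
  have BP: "BB R U {b} \<longleftrightarrow> odd (m + of_bool (b \<in> U) + y)" if "b \<in> {2,3}" for b
    using BB_single[OF f, of R b] that PR0 unfolding m_def y_def by auto
  have BR: "BB R U {b} \<longleftrightarrow> odd (m + of_bool (b \<in> U) + x)" if "b \<in> R" for b
    using BB_single[OF f, of R b] that PR0 unfolding m_def x_def by auto
  show ?case
  proof (cases "\<exists>b\<in>U. BB R U {b}")
    case True
    then obtain b where "b \<in> U" "BB R U {b}" by blast
    then show ?thesis using c_remove[OF g U _ _ Q IH] by blast
  next
    case False
    note stuck = False
    have Une: "U \<noteq> {}" using Q unfolding QQ_def by auto
    show ?thesis
    proof (cases "m = 1")
      case True
      then obtain b where "U = {b}" unfolding m_def by (metis card_1_singletonE)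
      then show ?thesis using CC_single U by auto
    next
      case False
      have "0 < card U" using Une f card_gt_0_iff by blast
      then have m2: "m \<ge> 2" using False unfolding m_def by linarith
      show ?thesis
      proof (cases "U \<inter> G = {}")
        case False
        then obtain c where cUG: "c \<in> U" "c \<in> G" by blast
        have modd: "odd m" using stuck BG[OF cUG(2)] cUG(1) by auto
        show ?thesis
        proof (cases "\<exists>\<pi>\<in>({2,3} \<union> R) - U. BB R U {\<pi>}")
          case True
          then obtain \<pi> where "\<pi> \<in> {2,3} \<union> R" "\<pi> \<notin> U" "BB R U {\<pi>}" by blast
          then show ?thesis using c_swap[OF g U cUG(1) _ _ _ _ Q _ IH] cUG(2) modd
            unfolding G_def m_def by blast
        next
          case False
          note noswap = False
          have PU: "\<pi> \<in> U \<Longrightarrow> even y" if "\<pi> \<in> {2,3}" for \<pi>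
            using stuck BP[OF that] modd by auto
          have PnU: "\<pi> \<notin> U \<Longrightarrow> odd y" if "\<pi> \<in> {2,3}" for \<pi>
            using noswap BP[OF that] modd that by auto
          have RU: "\<rho> \<in> U \<Longrightarrow> even x" if "\<rho> \<in> R" for \<rho>
            using stuck BR[OF that] modd by auto
          have RnU: "\<rho> \<notin> U \<Longrightarrow> odd x" if "\<rho> \<in> R" for \<rho>
            using noswap BR[OF that] modd that by auto
          have Pin: "\<pi> \<in> U" if pp: "\<pi> \<in> {2,3}" for \<pi>
          proof (rule ccontr)
            assume "\<pi> \<notin> U"
            then have oy: "odd y" using PnU[OF pp] by auto
            then have "y > 0" by (intro Nat.gr0I) auto
            then obtain \<rho> where r1: "\<rho> \<in> U" "\<rho> \<in> R" unfolding y_def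
              by (metis card_gt_0_iff disjoint_iff_not_equal inf_bot_right)
            have "U \<inter> R \<noteq> R" using oy evR unfolding y_def by metis
            then obtain \<rho>' where r2: "\<rho>' \<notin> U" "\<rho>' \<in> R" by blast
            show False using RU[OF r1(2) r1(1)] RnU[OF r2(2) r2(1)] by simp
          qed
          then have "U \<inter> {2,3} = {2,3}" by auto
          then have x2: "x = 2" unfolding x_def by simp
          have Rin: "R \<subseteq> U" using RnU x2 by auto
          have PRU: "{2,3} \<union> R \<subseteq> U" using Pin Rin by auto
          have "U \<noteq> {1..d}"
          proof
            assume UD: "U = {1..d}"
            obtain V where V: "V \<subseteq> {1..d}" "BB R U V" using W by blast
            have "card U = d" using UD by simp
            moreover have "U \<inter> {2,3} = {2,3}" "U \<inter> R = R" using UD PD RD by auto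
            moreover have "U \<inter> V = V" using UD V(1) by auto
            ultimately have e: "card U * card V + card (U\<inter>V) + card (U\<inter>{2,3}) * card (V\<inter>R) + card (U\<inter>R) * card (V\<inter>{2,3})
               = (d+1) * card V + 2 * card (V \<inter> R) + card R * card (V \<inter> {2,3})"
              by (simp add: algebra_simps)
            have "odd d" using modd \<open>card U = d\<close> unfolding m_def by simp
            then have "even ((d+1) * card V + 2 * card (V \<inter> R) + card R * card (V \<inter> {2,3}))"
              using evR by simp
            then have "\<not> BB R U V" unfolding BB_def e by simp
            then show False using V(2) by simp
          qed
          then obtain h where h: "h \<in> {1..d}" "h \<notin> U" using U by blast
          then have hG: "h \<in> G" using PRU unfolding G_def by auto
          obtain \<rho> where rho: "\<rho> \<in> R" using Rne by blast
          show ?thesis using c_full[OF g U PRU cUG(1) _ h(2) _ rho Q _ IH] cUG(2) hG modd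
            unfolding G_def m_def by blast
        qed
      next
        case True
        then have n0: "n = 0" unfolding n_def by simp
        have UPR: "U \<subseteq> {2,3} \<union> R" using True U unfolding G_def by auto
        have xo: "x > 0 \<Longrightarrow> odd x"
        proof -
          assume "x > 0"
          then obtain \<pi> where "\<pi> \<in> U" "\<pi> \<in> {2,3}" unfolding x_def
            by (metis card_gt_0_iff disjoint_iff_not_equal inf_bot_right)
          then show "odd x" using stuck BP[of \<pi>] split n0 by auto
        qed
        have yo: "y > 0 \<Longrightarrow> odd y"
        proof -
          assume "y > 0"
          then obtain \<rho> where "\<rho> \<in> U" "\<rho> \<in> R" unfolding y_def
            by (metis card_gt_0_iff disjoint_iff_not_equal inf_bot_right)
          then show "odd y" using stuck BR[of \<rho>] split n0 by auto
        qed
        have x2: "x \<le> 2"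
        proof -
          have "card (U \<inter> {2,3}) \<le> card {2::nat,3}" by (rule card_mono) auto
          then show ?thesis unfolding x_def by simp
        qed
        have y4: "y \<le> 4"
        proof -
          have "card (U \<inter> R) \<le> card R" using fR by (rule card_mono) auto
          then show ?thesis unfolding y_def using r4 by simp
        qed
        have QQ': "odd (m * (m+1) div 2 + x * y)" using Q unfolding QQ_def m_def x_def y_def .
        have "x = 1 \<and> y = 3"
        proof -
          have "x \<in> {0,1,2}" using x2 by auto
          moreover have "y \<in> {0,1,2,3,4}" using y4 by auto
          ultimately show ?thesis using xo yo QQ' m2 split n0 by auto
        qed
        then show ?thesis using cB[OF UPR] Q unfolding x_def y_def by auto
      qed
    qed
  qed
qed



fun wk :: "nat set \<Rightarrow> nat set \<Rightarrow> nat list \<Rightarrow> bool" where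
  "wk R U [] = (card U = 1)" |
  "wk R U (b # bs) = (BB R U {b} \<and> wk R (sd U {b}) bs)"

lemma wk_ok: "good d p R \<Longrightarrow> U \<subseteq> {1..d} \<Longrightarrow> QQ R U \<Longrightarrow> set bs \<subseteq> {1..d} \<Longrightarrow> wk R U bs \<Longrightarrow> vec U \<in> CC d p"
proof (induction bs arbitrary: U)
  case Nil
  then have "card U = 1" by simp
  then obtain b where "U = {b}" by (rule card_1_singletonE)
  then show ?case using CC_single Nil by auto
next
  case (Cons b bs)
  show ?case
  proof (rule walk[OF Cons.prems(1,2)])
    show "b \<in> {1..d}" "BB R U {b}" "QQ R U" using Cons.prems by auto
    assume "QQ R (sd U {b})" "sd U {b} \<subseteq> {1..d}"
    then show "vec (sd U {b}) \<in> CC d p" using Cons by auto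
  qed
qed

lemma good_tau: "6 \<le> d \<Longrightarrow> good d (tau d) {4,5}"
  unfolding good_def using tau_t tau_ord by auto

lemma good_sigma: "8 \<le> d \<Longrightarrow> good d (sigma d) {4,5,6,7}"
  unfolding good_def using sigma_t sigma_ord by auto

lemma card1_23: "A \<subseteq> {2,3::nat} \<Longrightarrow> card A = 1 \<Longrightarrow> A = {2} \<or> A = {3}"
  by (metis card_1_singletonE insert_subset singletonD insertE)

lemma card3_R: assumes "B \<subseteq> {4,5,6,7::nat}" "card B = 3"
  shows "B = {5,6,7} \<or> B = {4,6,7} \<or> B = {4,5,7} \<or> B = {4,5,6}"
proof -
  have "card ({4,5,6,7::nat} - B) = 1" using assms by (simp add: card_Diff_subset finite_subset)
  then obtain z where z: "{4,5,6,7::nat} - B = {z}" by (rule card_1_singletonE)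
  then have B: "B = {4,5,6,7} - {z}" and zz: "z \<in> {4,5,6,7}" using assms(1) by auto
  from zz consider "z = 4" | "z = 5" | "z = 6" | "z = 7" by blast
  then show ?thesis
  proof cases
    case 1 then show ?thesis unfolding B by auto
  next
    case 2 then show ?thesis unfolding B by auto
  next
    case 3 then show ?thesis unfolding B by auto
  next
    case 4 then show ?thesis unfolding B by auto
  qed
qed

lemma cB_sigma: assumes d: "8 \<le> d" and U: "U \<subseteq> {2,3} \<union> {4,5,6,7}"
  and x: "card (U \<inter> {2,3}) = 1" and y: "card (U \<inter> {4,5,6,7}) = 3" and Q: "QQ {4,5,6,7} U"
  shows "vec U \<in> CC d (sigma d)"
proof -
  have g: "good d (sigma d) {4,5,6,7}" using good_sigma[OF d] .
  have UU: "U = (U \<inter> {2,3}) \<union> (U \<inter> {4,5,6,7})" using U by auto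
  have UD: "U \<subseteq> {1..d}" using U d by auto
  have s: "{1,2,3,4,5,6,7,8} \<subseteq> {1..d}" using d by auto
  have A: "U \<inter> {2,3} = {2} \<or> U \<inter> {2,3} = {3}" using card1_23[OF _ x] by auto
  have B: "U \<inter> {4,5,6,7} = {5,6,7} \<or> U \<inter> {4,5,6,7} = {4,6,7} \<or> U \<inter> {4,5,6,7} = {4,5,7} \<or> U \<inter> {4,5,6,7} = {4,5,6}"
    using card3_R[OF _ y] by auto
  have W: "wk {4,5,6,7} U bs \<Longrightarrow> set bs \<subseteq> {1,2,3,4,5,6,7,8} \<Longrightarrow> vec U \<in> CC d (sigma d)" for bs
  proof -
    assume "wk {4,5,6,7} U bs" "set bs \<subseteq> {1,2,3,4,5,6,7,8}"
    moreover have "set bs \<subseteq> {1..d}" using calculation(2) s by (rule order_trans)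
    ultimately show ?thesis using wk_ok[OF g UD Q, of bs] by blast
  qed
  from A B show ?thesis
  proof (elim disjE)
    assume "U \<inter> {2,3} = {2}" "U \<inter> {4,5,6,7} = {5,6,7}"
    then have "U = {2,5,6,7}" using UU by auto
    then show ?thesis by (intro W[of "[3, 1, 5, 8, 2, 6, 1, 3, 7]"]) (simp_all add: BB_def sd_def)
  next
    assume "U \<inter> {2,3} = {2}" "U \<inter> {4,5,6,7} = {4,6,7}"
    then have "U = {2,4,6,7}" using UU by auto
    then show ?thesis by (intro W[of "[3, 1, 4, 8, 2, 6, 1, 3, 7]"]) (simp_all add: BB_def sd_def)
  next
    assume "U \<inter> {2,3} = {2}" "U \<inter> {4,5,6,7} = {4,5,7}"
    then have "U = {2,4,5,7}" using UU by auto
    then show ?thesis by (intro W[of "[3, 1, 4, 8, 2, 5, 1, 3, 7]"]) (simp_all add: BB_def sd_def)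
  next
    assume "U \<inter> {2,3} = {2}" "U \<inter> {4,5,6,7} = {4,5,6}"
    then have "U = {2,4,5,6}" using UU by auto
    then show ?thesis by (intro W[of "[3, 1, 4, 8, 2, 5, 1, 3, 6]"]) (simp_all add: BB_def sd_def)
  next
    assume "U \<inter> {2,3} = {3}" "U \<inter> {4,5,6,7} = {5,6,7}"
    then have "U = {3,5,6,7}" using UU by auto
    then show ?thesis by (intro W[of "[2, 1, 5, 8, 2, 6, 1, 3, 7]"]) (simp_all add: BB_def sd_def)
  next
    assume "U \<inter> {2,3} = {3}" "U \<inter> {4,5,6,7} = {4,6,7}"
    then have "U = {3,4,6,7}" using UU by auto
    then show ?thesis by (intro W[of "[2, 1, 4, 8, 2, 6, 1, 3, 7]"]) (simp_all add: BB_def sd_def)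
  next
    assume "U \<inter> {2,3} = {3}" "U \<inter> {4,5,6,7} = {4,5,7}"
    then have "U = {3,4,5,7}" using UU by auto
    then show ?thesis by (intro W[of "[2, 1, 4, 8, 2, 5, 1, 3, 7]"]) (simp_all add: BB_def sd_def)
  next
    assume "U \<inter> {2,3} = {3}" "U \<inter> {4,5,6,7} = {4,5,6}"
    then have "U = {3,4,5,6}" using UU by auto
    then show ?thesis by (intro W[of "[2, 1, 4, 8, 2, 5, 1, 3, 6]"]) (simp_all add: BB_def sd_def)
  qed
qed



lemma main_gen:
  assumes g: "good d p R" and r4: "card R \<le> 4"
    and cB: "\<And>U. U \<subseteq> {2,3} \<union> R \<Longrightarrow> card (U \<inter> {2,3}) = 1 \<Longrightarrow> card (U \<inter> R) = 3 \<Longrightarrow> QQ R U \<Longrightarrow> vec U \<in> CC d p"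
  shows "CC d p = NS d p - kerO d p"
proof
  have PR0: "{2,3} \<inter> R = {}" and RD: "R \<subseteq> {1..d}" and PD: "{2,3} \<subseteq> {1..d}"
    using good_facts[OF g] by auto
  have 1: "1 \<notin> R" using g unfolding good_def by auto
  show "CC d p \<subseteq> NS d p - kerO d p"
  proof (rule clos_min)
    show "evec ` {1..d} \<subseteq> NS d p - kerO d p"
    proof
      fix u assume "u \<in> evec ` {1..d}"
      then obtain b where b: "b \<in> {1..d}" "u = vec {b}" using evec_vec by auto
      have bD: "{b} \<subseteq> {1..d}" using b by auto
      have "u \<in> NS d p" using NS_vec[OF g bD] QQ_single[OF g] b by auto
      moreover have "u \<notin> kerO d p"
      proof -
        define a where "a = (if b = 1 then 2 else (1::nat))"
        have aD: "{a} \<subseteq> {1..d}" using b PD unfolding a_def by auto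
        have "BB R {b} {a}" unfolding BB_def a_def using 1 PR0 by (cases "b = 1") auto
        then show ?thesis using ker_vec[OF g bD] aD b by auto
      qed
      ultimately show "u \<in> NS d p - kerO d p" by auto
    qed
    show "Qclosed d p (NS d p - kerO d p)"
      unfolding Qclosed_def
    proof (intro conjI ballI impI)
      show "NS d p - kerO d p \<subseteq> NS d p" by auto
      fix v w assume v: "v \<in> NS d p - kerO d p" and w: "w \<in> NS d p - kerO d p" and q: "Qf d p (vadd v w)"
      obtain U where U: "U \<subseteq> {1..d}" "v = vec U" using v vecs_vec unfolding NS_def by blast
      obtain V where V: "V \<subseteq> {1..d}" "w = vec V" using w vecs_vec unfolding NS_def by blast
      have sD: "sd U V \<subseteq> {1..d}" using U V unfolding sd_def by auto
      have fU: "finite U" "finite V" using U V fin_sub by auto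
      have qU: "QQ R U" "QQ R V" using v w NS_vec[OF g U(1)] NS_vec[OF g V(1)] U V by auto
      have qs: "QQ R (sd U V)" using q Qf_vec[OF g sD] U V vadd_vec by auto
      have bUV: "BB R U V" using QQ_sd[OF fU, of R] qU qs by auto
      have "BB R (sd U V) V" using BB_sd[OF fU, of R V] BB_self bUV by auto
      then have "vec (sd U V) \<notin> kerO d p" using ker_vec[OF g sD] V by auto
      moreover have "vec (sd U V) \<in> NS d p" using NS_vec[OF g sD] qs by auto
      ultimately show "vadd v w \<in> NS d p - kerO d p" using U V vadd_vec by auto
    qed
  qed
  show "NS d p - kerO d p \<subseteq> CC d p"
  proof
    fix u assume u: "u \<in> NS d p - kerO d p"
    obtain U where U: "U \<subseteq> {1..d}" "u = vec U" using u vecs_vec unfolding NS_def by blast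
    have q: "QQ R U" using u NS_vec[OF g U(1)] U by auto
    have w: "\<exists>V\<subseteq>{1..d}. BB R U V" using u ker_vec[OF g U(1)] U by auto
    have "vec U \<in> CC d p" by (rule core[OF g r4 cB U(1) q w])
    then show "u \<in> CC d p" using U(2) by simp
  qed
qed

theorem lemma4p7:
  fixes d :: nat and p :: perm2
  assumes "(p = tau d \<and> d \<ge> 6) \<or> (p = sigma d \<and> d \<ge> 8)"
  shows "Qclosure d p (evec ` {1..d}) = NS d p - kerO d p"
  using assms
proof (elim disjE conjE)
  assume p: "p = tau d" and d: "6 \<le> d"
  have cB: "vec U \<in> CC d p" if "U \<subseteq> {2,3} \<union> {4,5}" "card (U \<inter> {2,3}) = 1" "card (U \<inter> {4,5}) = 3" for U
  proof -
    have "card (U \<inter> {4,5::nat}) \<le> card {4,5::nat}" by (rule card_mono) auto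
    then show ?thesis using that(3) by simp
  qed
  show ?thesis unfolding p using main_gen[OF good_tau[OF d]] cB p by auto
next
  assume p: "p = sigma d" and d: "8 \<le> d"
  show ?thesis unfolding p using main_gen[OF good_sigma[OF d]] cB_sigma[OF d] by auto
qed

end
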